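(* Let $S$ be an LAD-AG-groupoid. Then $S$ is self-dual, i.e. $a(bc)=c(ba)$ for all $a,b,c\in S$.
   Context: A groupoid is a set $S$ with a binary operation written as juxtaposition; $ab\cdot c$ means $(ab)c$ and $a\cdot bc$ means $a(bc)$. An AG-groupoid is a groupoid satisfying the left invertive law $(ab)c=(cb)a$ for all $a,b,c\in S$. An LAD-AG-groupoid (left abelian distributive AG-groupoid) is an AG-groupoid satisfying $a(bc)=(ab)(ca)$ for all $a,b,c\in S$. *)

theory Defs
  imports Main
begin

definition groupoid :: "'a set \<Rightarrow> ('a \<Rightarrow> 'a \<Rightarrow> 'a) \<Rightarrow> bool" where
  "groupoid S m \<longleftrightarrow> (\<forall>a\<in>S. \<forall>b\<in>S. m a b \<in> S)"

definition AG_groupoid :: "'a set \<Rightarrow> ('a \<Rightarrow> 'a \<Rightarrow> 'a) \<Rightarrow> bool" where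
  "AG_groupoid S m \<longleftrightarrow> groupoid S m \<and>
     (\<forall>a\<in>S. \<forall>b\<in>S. \<forall>c\<in>S. m (m a b) c = m (m c b) a)"

definition LAD_AG_groupoid :: "'a set \<Rightarrow> ('a \<Rightarrow> 'a \<Rightarrow> 'a) \<Rightarrow> bool" where
  "LAD_AG_groupoid S m \<longleftrightarrow> AG_groupoid S m \<and>
     (\<forall>a\<in>S. \<forall>b\<in>S. \<forall>c\<in>S. m a (m b c) = m (m a b) (m c a))"

definition self_dual :: "'a set \<Rightarrow> ('a \<Rightarrow> 'a \<Rightarrow> 'a) \<Rightarrow> bool" where
  "self_dual S m \<longleftrightarrow> (\<forall>a\<in>S. \<forall>b\<in>S. \<forall>c\<in>S. m a (m b c) = m c (m b a))"

end

theory Submission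
  imports Defs
begin

lemma abstract_sd:
  fixes m :: "'a\<Rightarrow>'a\<Rightarrow>'a"
  assumes L: "\<And>a b c. m (m a b) c = m (m c b) a"
    and D: "\<And>a b c. m a (m b c) = m (m a b) (m c a)"
  shows "m a (m b c) = m c (m b a)"
  using [[smt_timeout=300]] by (smt (verit) D L)

theorem mainTheorem2:
  fixes S :: "'a set" and m :: "'a \<Rightarrow> 'a \<Rightarrow> 'a"
  assumes "LAD_AG_groupoid S m"
  shows "self_dual S m"
  unfolding self_dual_def
proof (intro ballI)
  fix a b c assume a: "a \<in> S" and b: "b \<in> S" and c: "c \<in> S"
  have cl: "\<And>x y. x \<in> S \<Longrightarrow> y \<in> S \<Longrightarrow> m x y \<in> S"
    using assms unfolding LAD_AG_groupoid_def AG_groupoid_def groupoid_def by blast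
  have LI: "\<And>x y z. x \<in> S \<Longrightarrow> y \<in> S \<Longrightarrow> z \<in> S \<Longrightarrow> m (m x y) z = m (m z y) x"
    using assms unfolding LAD_AG_groupoid_def AG_groupoid_def by blast
  have LD: "\<And>x y z. x \<in> S \<Longrightarrow> y \<in> S \<Longrightarrow> z \<in> S \<Longrightarrow> m x (m y z) = m (m x y) (m z x)"
    using assms unfolding LAD_AG_groupoid_def by blast
  define r where "r x = (if x \<in> S then x else a)" for x
  have rS: "\<And>x. r x \<in> S" using a by (simp add: r_def)
  have rid: "\<And>x. x \<in> S \<Longrightarrow> r x = x" by (simp add: r_def)
  define m' where "m' x y = m (r x) (r y)" for x y
  have m'm: "\<And>x y. m' x y = m (r x) (r y)" by (simp add: m'_def)
  have rm: "\<And>x y. r (m' x y) = m' x y" by (simp add: m'_def rid cl rS)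
  have L': "\<And>x y z. m' (m' x y) z = m' (m' z y) x"
    by (metis m'm rm LI rS)
  have D': "\<And>x y z. m' x (m' y z) = m' (m' x y) (m' z x)"
    by (metis m'm rm LD rS)
  have "m' a (m' b c) = m' c (m' b a)" by (rule abstract_sd[OF L' D'])
  thus "m a (m b c) = m c (m b a)" by (simp add: m'_def rid a b c cl)
qed

end
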